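(* Let $n\ge1$. If $E$ is an equivalence relation on $\mathbb{N}$ which is not $\Sigma^0_n$, then $E$ is not $\Sigma^0_n$-graphable. In particular, for every $n\ge1$ there are $\Pi^0_n$ equivalence relations on $\mathbb{N}$ which are not $\Sigma^0_n$-graphable.
   Context: $E$ is $\Gamma$-graphable if there is a simple undirected graph $G\subseteq\mathbb{N}\times\mathbb{N}$ in $\Gamma$ whose connectedness relation (connected by a finite path) equals $E$. *)

theory Defs
  imports Main
begin

text \<open>PR n f: f is a primitive recursive function of arity n; f is only
  meaningful on argument lists of length n.\<close>
inductive PR :: "nat \<Rightarrow> (nat list \<Rightarrow> nat) \<Rightarrow> bool" where
  zero: "PR n (\<lambda>_. 0)"
| succ: "PR 1 (\<lambda>xs. Suc (hd xs))"
| proj: "i < n \<Longrightarrow> PR n (\<lambda>xs. xs ! i)"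
| comp: "PR m f \<Longrightarrow> length gs = m \<Longrightarrow> (\<forall>g\<in>set gs. PR n g)
           \<Longrightarrow> PR n (\<lambda>xs. f (map (\<lambda>g. g xs) gs))"
| prec: "PR n f \<Longrightarrow> PR (Suc (Suc n)) g
           \<Longrightarrow> PR (Suc n) (\<lambda>xs. rec_nat (f (tl xs)) (\<lambda>y r. g (y # r # tl xs)) (hd xs))"

text \<open>Sigma^0_0 = primitive recursive (decidable) relations;
  Sigma^0_(n+1) = existential projections of Pi^0_n relations;
  Pi^0_n = complements of Sigma^0_n relations.\<close>
fun sigma_rel :: "nat \<Rightarrow> nat \<Rightarrow> (nat list \<Rightarrow> bool) \<Rightarrow> bool" where
  "sigma_rel 0 k P = (\<exists>f. PR k f \<and> (\<forall>xs. length xs = k \<longrightarrow> (P xs \<longleftrightarrow> f xs \<noteq> 0)))"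
| "sigma_rel (Suc n) k P = (\<exists>Q. sigma_rel n (Suc k) (\<lambda>ys. \<not> Q ys) \<and>
      (\<forall>xs. length xs = k \<longrightarrow> (P xs \<longleftrightarrow> (\<exists>y. Q (y # xs)))))"

definition pi_rel :: "nat \<Rightarrow> nat \<Rightarrow> (nat list \<Rightarrow> bool) \<Rightarrow> bool" where
  "pi_rel n k P = sigma_rel n k (\<lambda>xs. \<not> P xs)"

definition Sigma0 :: "nat \<Rightarrow> (nat \<times> nat) set \<Rightarrow> bool" where
  "Sigma0 n R = sigma_rel n 2 (\<lambda>xs. (xs ! 0, xs ! 1) \<in> R)"

definition Pi0 :: "nat \<Rightarrow> (nat \<times> nat) set \<Rightarrow> bool" where
  "Pi0 n R = pi_rel n 2 (\<lambda>xs. (xs ! 0, xs ! 1) \<in> R)"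

definition Sigma0_graphable :: "nat \<Rightarrow> (nat \<times> nat) set \<Rightarrow> bool" where
  "Sigma0_graphable n E = (\<exists>G :: (nat \<times> nat) set. sym G \<and> irrefl G \<and> Sigma0 n G \<and> G\<^sup>* = E)"

end

theory Submission
  imports Defs "HOL-Library.Nat_Bijection"
begin

definition PRA :: "nat \<Rightarrow> (nat list \<Rightarrow> nat) \<Rightarrow> bool" where
  "PRA n f \<longleftrightarrow> (\<exists>g. PR n g \<and> (\<forall>xs. length xs = n \<longrightarrow> f xs = g xs))"

lemma PRA_cong: "PRA n f \<Longrightarrow> (\<And>xs. length xs = n \<Longrightarrow> f xs = g xs) \<Longrightarrow> PRA n g"
  unfolding PRA_def by metis

lemma PR_PRA: "PR n f \<Longrightarrow> PRA n f"
  unfolding PRA_def by blast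

lemma PRA_zero: "PRA n (\<lambda>_. 0)"
  by (rule PR_PRA, rule PR.zero)

lemma PRA_proj: "i < n \<Longrightarrow> PRA n (\<lambda>xs. xs ! i)"
  by (rule PR_PRA, rule PR.proj)

lemma PRA_succ: "PRA (Suc 0) (\<lambda>xs. Suc (hd xs))"
  using PR_PRA[OF PR.succ] by simp

lemma PRA_list_reps:
  "(\<forall>g\<in>set gs. PRA n g) \<Longrightarrow> \<exists>hs. length hs = length gs \<and> (\<forall>h\<in>set hs. PR n h) \<and>
      (\<forall>xs. length xs = n \<longrightarrow> map (\<lambda>g. g xs) gs = map (\<lambda>h. h xs) hs)"
proof (induction gs)
  case Nil then show ?case by simp
next
  case (Cons g gs)
  then obtain hs where hs: "length hs = length gs" "\<forall>h\<in>set hs. PR n h"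
      "\<forall>xs. length xs = n \<longrightarrow> map (\<lambda>g. g xs) gs = map (\<lambda>h. h xs) hs" by auto
  from Cons.prems obtain h where h: "PR n h" "\<forall>xs. length xs = n \<longrightarrow> g xs = h xs"
    unfolding PRA_def by auto
  show ?case by (rule exI[of _ "h # hs"]) (use hs h in auto)
qed

lemma PRA_comp: "PRA m f \<Longrightarrow> length gs = m \<Longrightarrow> \<forall>g\<in>set gs. PRA n g
   \<Longrightarrow> PRA n (\<lambda>xs. f (map (\<lambda>g. g xs) gs))"
proof -
  assume f: "PRA m f" and l: "length gs = m" and gs: "\<forall>g\<in>set gs. PRA n g"
  obtain f' where f': "PR m f'" "\<forall>xs. length xs = m \<longrightarrow> f xs = f' xs" using f unfolding PRA_def by auto
  obtain hs where hs: "length hs = length gs" "\<forall>h\<in>set hs. PR n h"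
      "\<forall>xs. length xs = n \<longrightarrow> map (\<lambda>g. g xs) gs = map (\<lambda>h. h xs) hs"
    using PRA_list_reps[OF gs] by auto
  have "PR n (\<lambda>xs. f' (map (\<lambda>h. h xs) hs))" using PR.comp[OF f'(1) _ hs(2)] hs(1) l by simp
  moreover have "\<forall>xs. length xs = n \<longrightarrow> f (map (\<lambda>g. g xs) gs) = f' (map (\<lambda>h. h xs) hs)"
    using hs f' l by (metis length_map)
  ultimately show ?thesis unfolding PRA_def by blast
qed

lemma PRA_prec: "PRA n f \<Longrightarrow> PRA (Suc (Suc n)) g \<Longrightarrow>
   PRA (Suc n) (\<lambda>xs. rec_nat (f (tl xs)) (\<lambda>y r. g (y # r # tl xs)) (hd xs))"
proof -
  assume f: "PRA n f" and g: "PRA (Suc (Suc n)) g"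
  obtain f' where f': "PR n f'" "\<forall>xs. length xs = n \<longrightarrow> f xs = f' xs" using f unfolding PRA_def by auto
  obtain g' where g': "PR (Suc (Suc n)) g'" "\<forall>xs. length xs = Suc (Suc n) \<longrightarrow> g xs = g' xs"
    using g unfolding PRA_def by auto
  have "\<forall>xs. length xs = Suc n \<longrightarrow> rec_nat (f (tl xs)) (\<lambda>y r. g (y # r # tl xs)) (hd xs)
        = rec_nat (f' (tl xs)) (\<lambda>y r. g' (y # r # tl xs)) (hd xs)"
  proof (intro allI impI)
    fix xs :: "nat list" assume "length xs = Suc n"
    then have "(\<lambda>y r. g (y # r # tl xs)) = (\<lambda>y r. g' (y # r # tl xs))" "f (tl xs) = f' (tl xs)"
      using f' g' by auto
    then show "rec_nat (f (tl xs)) (\<lambda>y r. g (y # r # tl xs)) (hd xs)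
        = rec_nat (f' (tl xs)) (\<lambda>y r. g' (y # r # tl xs)) (hd xs)" by simp
  qed
  then show ?thesis unfolding PRA_def using PR.prec[OF f'(1) g'(1)] by blast
qed


definition LPRA :: "nat \<Rightarrow> nat \<Rightarrow> (nat list \<Rightarrow> nat list) \<Rightarrow> bool" where
  "LPRA n k G \<longleftrightarrow> (\<forall>xs. length xs = n \<longrightarrow> length (G xs) = k) \<and> (\<forall>i<k. PRA n (\<lambda>xs. G xs ! i))"

lemma PRA_compL: "PRA k h \<Longrightarrow> LPRA n k G \<Longrightarrow> PRA n (\<lambda>xs. h (G xs))"
proof -
  assume h: "PRA k h" and G: "LPRA n k G"
  have "\<forall>g\<in>set (map (\<lambda>i xs. G xs ! i) [0..<k]). PRA n g"
    using G unfolding LPRA_def by simp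
  then have "PRA n (\<lambda>xs. h (map (\<lambda>g. g xs) (map (\<lambda>i xs. G xs ! i) [0..<k])))"
    by (rule PRA_comp[OF h, rotated]) simp
  then show ?thesis
  proof (rule PRA_cong)
    fix xs :: "nat list" assume "length xs = n"
    then have "length (G xs) = k" using G by (auto simp: LPRA_def)
    then have "map (\<lambda>g. g xs) (map (\<lambda>i xs. G xs ! i) [0..<k]) = G xs"
      by (intro nth_equalityI) auto
    then show "h (map (\<lambda>g. g xs) (map (\<lambda>i xs. G xs ! i) [0..<k])) = h (G xs)" by simp
  qed
qed

lemma LPRA_nil: "LPRA n 0 (\<lambda>xs. [])"
  by (simp add: LPRA_def)

lemma LPRA_cons: "PRA n f \<Longrightarrow> LPRA n k G \<Longrightarrow> LPRA n (Suc k) (\<lambda>xs. f xs # G xs)"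
  unfolding LPRA_def by (auto simp: less_Suc_eq_0_disj)

lemma LPRA_id: "LPRA n n (\<lambda>xs. xs)"
  by (simp add: LPRA_def PRA_proj)

lemma LPRA_tl1: "LPRA (Suc n) n tl"
  unfolding LPRA_def
proof (intro conjI allI impI)
  fix i assume "i < n"
  then have "PRA (Suc n) (\<lambda>xs. xs ! Suc i)" by (intro PRA_proj) simp
  then show "PRA (Suc n) (\<lambda>xs. tl xs ! i)"
    by (rule PRA_cong) (simp add: nth_tl \<open>i < n\<close>)
qed simp

lemma LPRA_tl: "LPRA n k G \<Longrightarrow> LPRA (Suc n) k (\<lambda>xs. G (tl xs))"
  unfolding LPRA_def
proof (intro conjI allI impI)
  fix i assume G: "(\<forall>xs. length xs = n \<longrightarrow> length (G xs) = k) \<and> (\<forall>i<k. PRA n (\<lambda>xs. G xs ! i))" and "i < k"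
  then have "PRA n (\<lambda>xs. G xs ! i)" by auto
  then show "PRA (Suc n) (\<lambda>xs. G (tl xs) ! i)"
    using PRA_compL[OF _ LPRA_tl1] by blast
qed auto

lemma PRA_tl: "PRA n f \<Longrightarrow> PRA (Suc n) (\<lambda>xs. f (tl xs))"
  using PRA_compL[OF _ LPRA_tl1] by blast

lemma PRA_hd: "PRA (Suc n) (\<lambda>xs. hd xs)"
  by (rule PRA_cong[OF PRA_proj[of 0]]) (auto simp: length_Suc_conv)

lemma PRA_hd2: "PRA (Suc (Suc n)) (\<lambda>xs. hd (tl xs))"
  by (rule PRA_tl[OF PRA_hd])

lemma PRA_hd3: "PRA (Suc (Suc (Suc n))) (\<lambda>xs. hd (tl (tl xs)))"
  by (rule PRA_tl[OF PRA_hd2])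

lemma PRA_hd4: "PRA (Suc (Suc (Suc (Suc n)))) (\<lambda>xs. hd (tl (tl (tl xs))))"
  by (rule PRA_tl[OF PRA_hd3])

lemma PRA_nth1: "i < n \<Longrightarrow> PRA (Suc n) (\<lambda>xs. tl xs ! i)"
  by (rule PRA_tl[OF PRA_proj])

lemma PRA_nth2: "i < n \<Longrightarrow> PRA (Suc (Suc n)) (\<lambda>xs. tl (tl xs) ! i)"
  by (rule PRA_tl[OF PRA_nth1])

lemma PRA_nth3: "i < n \<Longrightarrow> PRA (Suc (Suc (Suc n))) (\<lambda>xs. tl (tl (tl xs)) ! i)"
  by (rule PRA_tl[OF PRA_nth2])

lemma PRA_nth4: "i < n \<Longrightarrow> PRA (Suc (Suc (Suc (Suc n)))) (\<lambda>xs. tl (tl (tl (tl xs))) ! i)"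
  by (rule PRA_tl[OF PRA_nth3])

lemma PRA_Suc: "PRA n f \<Longrightarrow> PRA n (\<lambda>xs. Suc (f xs))"
  using PRA_compL[OF PRA_succ LPRA_cons[OF _ LPRA_nil]] by simp

lemma PRA_const: "PRA n (\<lambda>_. c)"
  by (induction c) (auto intro: PRA_zero PRA_Suc)

lemma PRA_un: "PRA (Suc 0) (\<lambda>xs. F (xs ! 0)) \<Longrightarrow> PRA n f \<Longrightarrow> PRA n (\<lambda>xs. F (f xs))"
  using PRA_compL[OF _ LPRA_cons[OF _ LPRA_nil]] by fastforce

lemma PRA_bin: "PRA (Suc (Suc 0)) (\<lambda>xs. F (xs ! 0) (xs ! 1)) \<Longrightarrow> PRA n f \<Longrightarrow> PRA n g
   \<Longrightarrow> PRA n (\<lambda>xs. F (f xs) (g xs))"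
  using PRA_compL[OF _ LPRA_cons[OF _ LPRA_cons[OF _ LPRA_nil]]] by fastforce

lemma PRA_rec:
  assumes F0: "\<And>xs. F 0 xs = f xs" and FS: "\<And>y xs. F (Suc y) xs = g (y # F y xs # xs)"
    and f: "PRA n f" and g: "PRA (Suc (Suc n)) g"
  shows "PRA (Suc n) (\<lambda>ys. F (hd ys) (tl ys))"
proof -
  have "rec_nat (f xs) (\<lambda>y r. g (y # r # xs)) y = F y xs" for y xs
    by (induction y) (simp_all add: F0 FS)
  then show ?thesis using PRA_prec[OF f g] by simp
qed

lemma PRA_rec_at:
  assumes F0: "\<And>xs. F 0 xs = f xs" and FS: "\<And>y xs. F (Suc y) xs = g (y # F y xs # xs)"
    and f: "PRA n f" and g: "PRA (Suc (Suc n)) g" and a: "PRA n a"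
  shows "PRA n (\<lambda>xs. F (a xs) xs)"
  using PRA_compL[OF PRA_rec[OF F0 FS f g] LPRA_cons[OF a LPRA_id]] by simp

lemma PRA_add2: "PRA (Suc (Suc 0)) (\<lambda>xs. xs ! 0 + xs ! 1)"
proof -
  have "PRA (Suc (Suc 0)) (\<lambda>ys. (\<lambda>y xs. y + xs ! 0) (hd ys) (tl ys))"
    by (rule PRA_rec[where f = "\<lambda>xs. xs ! 0" and g = "\<lambda>ys. Suc (ys ! 1)"])
       (auto intro!: PRA_proj PRA_Suc)
  then show ?thesis by (rule PRA_cong) (auto simp: length_Suc_conv)
qed

lemma PRA_add: "PRA n f \<Longrightarrow> PRA n g \<Longrightarrow> PRA n (\<lambda>xs. f xs + g xs)"
  by (rule PRA_bin[OF PRA_add2])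

lemma PRA_mult2: "PRA (Suc (Suc 0)) (\<lambda>xs. xs ! 0 * xs ! 1)"
proof -
  have "PRA (Suc (Suc 0)) (\<lambda>ys. (\<lambda>y xs. y * xs ! 0) (hd ys) (tl ys))"
    by (rule PRA_rec[where f = "\<lambda>xs. 0" and g = "\<lambda>ys. ys ! 1 + ys ! 2"])
       (auto intro!: PRA_proj PRA_add PRA_const)
  then show ?thesis by (rule PRA_cong) (auto simp: length_Suc_conv)
qed

lemma PRA_mult: "PRA n f \<Longrightarrow> PRA n g \<Longrightarrow> PRA n (\<lambda>xs. f xs * g xs)"
  by (rule PRA_bin[OF PRA_mult2])

lemma PRA_pred1: "PRA (Suc 0) (\<lambda>xs. xs ! 0 - 1)"
proof -
  have "PRA (Suc 0) (\<lambda>ys. (\<lambda>y xs. y - 1) (hd ys) (tl ys))"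
    by (rule PRA_rec[where f = "\<lambda>xs. 0" and g = "\<lambda>ys. ys ! 0"])
       (auto intro!: PRA_proj PRA_const)
  then show ?thesis by (rule PRA_cong) (auto simp: length_Suc_conv)
qed

lemma PRA_sub2: "PRA (Suc (Suc 0)) (\<lambda>xs. xs ! 0 - xs ! 1)"
proof -
  have "PRA (Suc (Suc 0)) (\<lambda>ys. (\<lambda>y xs. xs ! 0 - y) (hd ys) (tl ys))"
    using PRA_un[OF PRA_pred1 PRA_proj[of 1 "Suc (Suc (Suc 0))"]]
    by (intro PRA_rec[where f = "\<lambda>xs. xs ! 0" and g = "\<lambda>ys. ys ! 1 - 1"])
       (auto intro!: PRA_proj)
  then have "PRA (Suc (Suc 0)) (\<lambda>xs. (\<lambda>ys. (\<lambda>y xs. xs ! 0 - y) (hd ys) (tl ys)) [xs ! 1, xs ! 0])"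
    by (rule PRA_compL) (intro LPRA_cons LPRA_nil PRA_proj; simp)
  then show ?thesis by (rule PRA_cong) auto
qed

lemma PRA_sub: "PRA n f \<Longrightarrow> PRA n g \<Longrightarrow> PRA n (\<lambda>xs. f xs - g xs)"
  by (rule PRA_bin[OF PRA_sub2])

lemma PRA_sg1: "PRA (Suc 0) (\<lambda>xs. if xs ! 0 = 0 then 0 else 1)"
proof -
  have "PRA (Suc 0) (\<lambda>ys. (\<lambda>y xs. if y = 0 then 0 else 1::nat) (hd ys) (tl ys))"
    by (rule PRA_rec[where f = "\<lambda>xs. 0" and g = "\<lambda>ys. 1"])
       (auto intro!: PRA_const)
  then show ?thesis by (rule PRA_cong) (auto simp: length_Suc_conv)
qed

lemma PRA_if0: "PRA n c \<Longrightarrow> PRA n a \<Longrightarrow> PRA n b \<Longrightarrow> PRA n (\<lambda>xs. if c xs = 0 then b xs else a xs)"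
proof -
  assume c: "PRA n c" and a: "PRA n a" and b: "PRA n b"
  have s: "PRA n (\<lambda>xs. if c xs = 0 then 0 else 1)" by (rule PRA_un[OF PRA_sg1 c])
  have "PRA n (\<lambda>xs. (if c xs = 0 then 0 else 1) * a xs + (1 - (if c xs = 0 then 0 else 1)) * b xs)"
    by (intro PRA_add PRA_mult PRA_sub s a b PRA_const)
  then show ?thesis by (rule PRA_cong) auto
qed

lemma PRA_sum:
  assumes h: "PRA (Suc n) h" and b: "PRA n b"
  shows "PRA n (\<lambda>xs. \<Sum>y<b xs. h (y # xs))"
proof -
  have g: "PRA (Suc (Suc n)) (\<lambda>ys. ys ! 1 + h (hd ys # tl (tl ys)))"
  proof (intro PRA_add PRA_proj)
    have "LPRA (Suc (Suc n)) n (\<lambda>xs. tl (tl xs))" by (rule LPRA_tl[OF LPRA_tl1])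
    then show "PRA (Suc (Suc n)) (\<lambda>ys. h (hd ys # tl (tl ys)))"
      by (intro PRA_compL[OF h] LPRA_cons PRA_hd)
  qed simp
  show ?thesis
    by (rule PRA_rec_at[where F = "\<lambda>y xs. \<Sum>i<y. h (i # xs)" and f = "\<lambda>_. 0", OF _ _ PRA_const g b])
       simp_all
qed


definition PRR :: "nat \<Rightarrow> (nat list \<Rightarrow> bool) \<Rightarrow> bool" where
  "PRR n P \<longleftrightarrow> PRA n (\<lambda>xs. if P xs then 1 else 0)"

lemma PRR_cong: "PRR n P \<Longrightarrow> (\<And>xs. length xs = n \<Longrightarrow> P xs = Q xs) \<Longrightarrow> PRR n Q"
  unfolding PRR_def by (erule PRA_cong) simp

lemma PRA_if: "PRR n P \<Longrightarrow> PRA n a \<Longrightarrow> PRA n b \<Longrightarrow> PRA n (\<lambda>xs. if P xs then a xs else b xs)"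
  unfolding PRR_def by (drule (2) PRA_if0) (erule PRA_cong, simp)

lemma PRR_nz: "PRA n f \<Longrightarrow> PRR n (\<lambda>xs. f xs \<noteq> 0)"
  unfolding PRR_def by (drule PRA_if0[OF _ PRA_const[of n 1] PRA_const[of n 0]]) (erule PRA_cong, simp)

lemma PRR_eq: "PRA n f \<Longrightarrow> PRA n g \<Longrightarrow> PRR n (\<lambda>xs. f xs = g xs)"
proof -
  assume f: "PRA n f" and g: "PRA n g"
  have "PRR n (\<lambda>xs. 1 - ((f xs - g xs) + (g xs - f xs)) \<noteq> 0)"
    by (intro PRR_nz PRA_sub PRA_add PRA_const f g)
  then show ?thesis by (rule PRR_cong) auto
qed

lemma PRR_less: "PRA n f \<Longrightarrow> PRA n g \<Longrightarrow> PRR n (\<lambda>xs. f xs < g xs)"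
proof -
  assume f: "PRA n f" and g: "PRA n g"
  have "PRR n (\<lambda>xs. g xs - f xs \<noteq> 0)"
    by (intro PRR_nz PRA_sub f g)
  then show ?thesis by (rule PRR_cong) auto
qed

lemma PRR_not: "PRR n P \<Longrightarrow> PRR n (\<lambda>xs. \<not> P xs)"
  unfolding PRR_def by (drule PRA_sub[OF PRA_const[of n 1]]) (erule PRA_cong, simp)

lemma PRR_and: "PRR n P \<Longrightarrow> PRR n Q \<Longrightarrow> PRR n (\<lambda>xs. P xs \<and> Q xs)"
  unfolding PRR_def by (drule (1) PRA_mult) (erule PRA_cong, simp)

lemma PRR_or: "PRR n P \<Longrightarrow> PRR n Q \<Longrightarrow> PRR n (\<lambda>xs. P xs \<or> Q xs)"
proof -
  assume "PRR n P" "PRR n Q"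
  then have "PRR n (\<lambda>xs. \<not> (\<not> P xs \<and> \<not> Q xs))" by (intro PRR_not PRR_and)
  then show ?thesis by (rule PRR_cong) auto
qed

lemma PRR_imp: "PRR n P \<Longrightarrow> PRR n Q \<Longrightarrow> PRR n (\<lambda>xs. P xs \<longrightarrow> Q xs)"
proof -
  assume "PRR n P" "PRR n Q"
  then have "PRR n (\<lambda>xs. \<not> P xs \<or> Q xs)" by (intro PRR_not PRR_or)
  then show ?thesis by (rule PRR_cong) auto
qed

lemma PRR_iff: "PRR n P \<Longrightarrow> PRR n Q \<Longrightarrow> PRR n (\<lambda>xs. P xs = Q xs)"
proof -
  assume "PRR n P" "PRR n Q"
  then have "PRR n (\<lambda>xs. (P xs \<longrightarrow> Q xs) \<and> (Q xs \<longrightarrow> P xs))" by (intro PRR_imp PRR_and)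
  then show ?thesis by (rule PRR_cong) auto
qed

lemma PRR_le: "PRA n f \<Longrightarrow> PRA n g \<Longrightarrow> PRR n (\<lambda>xs. f xs \<le> g xs)"
proof -
  assume f: "PRA n f" and g: "PRA n g"
  have "PRR n (\<lambda>xs. \<not> g xs < f xs)"
    by (intro PRR_not PRR_less f g)
  then show ?thesis by (rule PRR_cong) auto
qed

lemma PRR_neq: "PRA n f \<Longrightarrow> PRA n g \<Longrightarrow> PRR n (\<lambda>xs. f xs \<noteq> g xs)"
  by (intro PRR_not PRR_eq)

lemma PRR_ball:
  assumes P: "PRR (Suc n) (\<lambda>ys. P (hd ys) (tl ys))" and b: "PRA n b"
  shows "PRR n (\<lambda>xs. \<forall>y<b xs. P y xs)"
proof -
  have "PRA (Suc n) (\<lambda>ys. if P (hd ys) (tl ys) then 0 else 1)"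
    by (intro PRA_if P PRA_const)
  then have "PRA n (\<lambda>xs. \<Sum>y<b xs. (\<lambda>ys. if P (hd ys) (tl ys) then 0 else 1) (y # xs))"
    by (rule PRA_sum[OF _ b])
  then have "PRR n (\<lambda>xs. \<not> (\<Sum>y<b xs. (\<lambda>ys. if P (hd ys) (tl ys) then 0 else 1::nat) (y # xs)) \<noteq> 0)"
    by (intro PRR_not PRR_nz)
  then show ?thesis by (rule PRR_cong) auto
qed

lemma PRR_bex:
  assumes P: "PRR (Suc n) (\<lambda>ys. P (hd ys) (tl ys))" and b: "PRA n b"
  shows "PRR n (\<lambda>xs. \<exists>y<b xs. P y xs)"
proof -
  have "PRR n (\<lambda>xs. \<not> (\<forall>y<b xs. \<not> P y xs))"
    by (intro PRR_not PRR_ball[OF _ b] P)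
  then show ?thesis by (rule PRR_cong) auto
qed

lemma PRA_graph:
  assumes R: "PRR (Suc n) (\<lambda>ys. R (hd ys) (tl ys))" and b: "PRA n b"
    and fR: "\<And>xs. length xs = n \<Longrightarrow> f xs \<le> b xs \<and> R (f xs) xs \<and> (\<forall>y. R y xs \<longrightarrow> y = f xs)"
  shows "PRA n f"
proof -
  have "PRA (Suc n) (\<lambda>ys. if R (hd ys) (tl ys) then hd ys else 0)"
    by (intro PRA_if R PRA_hd PRA_const)
  then have "PRA n (\<lambda>xs. \<Sum>y<Suc (b xs). (\<lambda>ys. if R (hd ys) (tl ys) then hd ys else 0) (y # xs))"
    by (rule PRA_sum[OF _ PRA_Suc[OF b]])
  then show ?thesis
  proof (rule PRA_cong)
    fix xs :: "nat list" assume "length xs = n"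
    note h = fR[OF this]
    have "(\<Sum>y<Suc (b xs). (\<lambda>ys. if R (hd ys) (tl ys) then hd ys else 0) (y # xs))
        = (\<Sum>y<Suc (b xs). if y = f xs then y else 0)"
      by (rule sum.cong) (use h in auto)
    also have "\<dots> = f xs" using h by (simp add: sum.delta' less_Suc_eq_le)
    finally show "(\<Sum>y<Suc (b xs). (\<lambda>ys. if R (hd ys) (tl ys) then hd ys else 0) (y # xs)) = f xs" .
  qed
qed

definition pe :: "nat \<Rightarrow> nat \<Rightarrow> nat" where "pe a b = prod_encode (a, b)"
definition pf :: "nat \<Rightarrow> nat" where "pf p = fst (prod_decode p)"
definition ps :: "nat \<Rightarrow> nat" where "ps p = snd (prod_decode p)"

lemma pf_pe[simp]: "pf (pe a b) = a" and ps_pe[simp]: "ps (pe a b) = b"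
  by (simp_all add: pf_def ps_def pe_def)

lemma pe_pf_ps[simp]: "pe (pf p) (ps p) = p"
  by (simp add: pf_def ps_def pe_def)

lemma pe_eq_iff[simp]: "pe a b = pe c d \<longleftrightarrow> a = c \<and> b = d"
  by (simp add: pe_def)

lemma pe_ge1: "a \<le> pe a b" and pe_ge2: "b \<le> pe a b"
  by (simp_all add: pe_def le_prod_encode_1 le_prod_encode_2)

lemma pe_pfD: "pe y c = p \<Longrightarrow> y = pf p" and pe_psD: "pe c y = p \<Longrightarrow> y = ps p"
  by auto

lemma ps_le: "ps p \<le> p"
  using pe_ge2[where a="pf p" and b="ps p"] by simp

lemma pf_le: "pf p \<le> p"
  using pe_ge1[where a="pf p" and b="ps p"] by simp

lemma PRA_triangle1: "PRA (Suc 0) (\<lambda>xs. triangle (xs ! 0))"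
proof -
  have "PRA (Suc 0) (\<lambda>ys. (\<lambda>y xs. triangle y) (hd ys) (tl ys))"
    by (rule PRA_rec[where f = "\<lambda>xs. 0" and g = "\<lambda>ys. ys ! 1 + Suc (ys ! 0)"])
       (auto intro!: PRA_proj PRA_const PRA_add PRA_Suc)
  then show ?thesis by (rule PRA_cong) (auto simp: length_Suc_conv)
qed

lemma PRA_pe: "PRA n f \<Longrightarrow> PRA n g \<Longrightarrow> PRA n (\<lambda>xs. pe (f xs) (g xs))"
proof -
  assume f: "PRA n f" and g: "PRA n g"
  have "PRA n (\<lambda>xs. triangle (f xs + g xs) + f xs)"
    by (intro PRA_add PRA_un[OF PRA_triangle1] f g)
  then show ?thesis by (rule PRA_cong) (simp add: pe_def prod_encode_def)
qed

lemma PRA_pf1: "PRA (Suc 0) (\<lambda>xs. pf (xs ! 0))"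
proof (rule PRA_graph[where R = "\<lambda>y xs. \<exists>c<Suc (xs ! 0). pe y c = xs ! 0" and b = "\<lambda>xs. xs ! 0"])
  show "PRR (Suc (Suc 0)) (\<lambda>ys. \<exists>c<Suc (tl ys ! 0). pe (hd ys) c = tl ys ! 0)"
    by (intro PRR_bex PRR_eq PRA_pe PRA_hd PRA_nth1 PRA_tl PRA_Suc) simp_all
  show "PRA (Suc 0) (\<lambda>xs. xs ! 0)" by (simp add: PRA_proj)
  fix xs :: "nat list"
  show "pf (xs ! 0) \<le> xs ! 0 \<and> (\<exists>c<Suc (xs ! 0). pe (pf (xs ! 0)) c = xs ! 0) \<and>
      (\<forall>y. (\<exists>c<Suc (xs ! 0). pe y c = xs ! 0) \<longrightarrow> y = pf (xs ! 0))"
    using pf_le ps_le by (auto intro!: exI[of _ "ps (xs ! 0)"] simp: le_imp_less_Suc dest: pe_pfD)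
qed

lemma PRA_ps1: "PRA (Suc 0) (\<lambda>xs. ps (xs ! 0))"
proof (rule PRA_graph[where R = "\<lambda>y xs. \<exists>c<Suc (xs ! 0). pe c y = xs ! 0" and b = "\<lambda>xs. xs ! 0"])
  show "PRR (Suc (Suc 0)) (\<lambda>ys. \<exists>c<Suc (tl ys ! 0). pe c (hd ys) = tl ys ! 0)"
    by (intro PRR_bex PRR_eq PRA_pe PRA_hd PRA_nth1 PRA_tl PRA_Suc) simp_all
  show "PRA (Suc 0) (\<lambda>xs. xs ! 0)" by (simp add: PRA_proj)
  fix xs :: "nat list"
  show "ps (xs ! 0) \<le> xs ! 0 \<and> (\<exists>c<Suc (xs ! 0). pe c (ps (xs ! 0)) = xs ! 0) \<and>
      (\<forall>y. (\<exists>c<Suc (xs ! 0). pe c y = xs ! 0) \<longrightarrow> y = ps (xs ! 0))"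
    using pf_le ps_le by (auto intro!: exI[of _ "pf (xs ! 0)"] simp: le_imp_less_Suc dest: pe_psD)
qed

lemma PRA_pf: "PRA n f \<Longrightarrow> PRA n (\<lambda>xs. pf (f xs))"
  by (rule PRA_un[OF PRA_pf1])

lemma PRA_ps: "PRA n f \<Longrightarrow> PRA n (\<lambda>xs. ps (f xs))"
  by (rule PRA_un[OF PRA_ps1])


definition cons_c :: "nat \<Rightarrow> nat \<Rightarrow> nat" where "cons_c a l = Suc (pe a l)"
definition hd_c :: "nat \<Rightarrow> nat" where "hd_c z = (if z = 0 then 0 else pf (z - 1))"
definition tl_c :: "nat \<Rightarrow> nat" where "tl_c z = (if z = 0 then 0 else ps (z - 1))"
definition tlk :: "nat \<Rightarrow> nat \<Rightarrow> nat" where "tlk i z = (tl_c ^^ i) z"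
definition nth_c :: "nat \<Rightarrow> nat \<Rightarrow> nat" where "nth_c z i = hd_c (tlk i z)"

primrec lcode :: "nat list \<Rightarrow> nat" where
  "lcode [] = 0"
| "lcode (a # l) = cons_c a (lcode l)"

lemma hd_c_cons[simp]: "hd_c (cons_c a l) = a" and tl_c_cons[simp]: "tl_c (cons_c a l) = l"
  by (simp_all add: hd_c_def tl_c_def cons_c_def)

lemma hd_c_0[simp]: "hd_c 0 = 0" and tl_c_0[simp]: "tl_c 0 = 0"
  by (simp_all add: hd_c_def tl_c_def)

lemma cons_c_nz[simp]: "cons_c a l \<noteq> 0"
  by (simp add: cons_c_def)

lemma cons_c_inj[simp]: "cons_c a l = cons_c b m \<longleftrightarrow> a = b \<and> l = m"
  by (simp add: cons_c_def)

lemma lcode_0_iff[simp]: "lcode l = 0 \<longleftrightarrow> l = []"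
  by (cases l) auto

lemma lcode_inj: "lcode l = lcode m \<Longrightarrow> l = m"
proof (induction l arbitrary: m)
  case Nil then show ?case by simp
next
  case (Cons a l) then show ?case by (cases m) auto
qed

lemma tl_c_lcode: "tl_c (lcode l) = lcode (tl l)"
  by (cases l) auto

lemma hd_c_lcode: "hd_c (lcode l) = (case l of [] \<Rightarrow> 0 | a # _ \<Rightarrow> a)"
  by (cases l) auto

lemma tlk_Suc: "tlk (Suc i) z = tl_c (tlk i z)"
  by (simp add: tlk_def)

lemma tlk_0[simp]: "tlk 0 z = z"
  by (simp add: tlk_def)

lemma tlk_lcode: "tlk i (lcode l) = lcode (drop i l)"
  by (induction i) (simp_all add: tlk_Suc tl_c_lcode drop_Suc tl_drop)

lemma nth_c_lcode: "nth_c (lcode l) i = (if i < length l then l ! i else 0)"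
  by (simp add: nth_c_def tlk_lcode hd_c_lcode split: list.split)
     (metis Cons_nth_drop_Suc drop_all leI list.distinct(1) list.inject)

lemma length_le_lcode: "length l \<le> lcode l"
proof (induction l)
  case (Cons a l)
  then show ?case using pe_ge2[where a=a and b="lcode l"] by (simp add: cons_c_def)
qed simp

lemma lcode_surj: "\<exists>l. z = lcode l"
proof (induction z rule: less_induct)
  case (less z)
  show ?case
  proof (cases z)
    case 0 then show ?thesis by (intro exI[of _ "[]"]) simp
  next
    case (Suc p)
    have "ps p < z" using ps_le[of p] Suc by simp
    then obtain l where l: "ps p = lcode l" using less by auto
    have "z = cons_c (pf p) (ps p)" using Suc by (simp add: cons_c_def)
    then have "z = lcode (pf p # l)" using l by simp
    then show ?thesis by blast
  qed
qed

lemma tlk_lcode_0_iff: "tlk i (lcode l) = 0 \<longleftrightarrow> length l \<le> i"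
  by (simp add: tlk_lcode)

lemma PRA_cons_c: "PRA n f \<Longrightarrow> PRA n g \<Longrightarrow> PRA n (\<lambda>xs. cons_c (f xs) (g xs))"
  unfolding cons_c_def by (intro PRA_Suc PRA_pe)

lemma PRA_hd_c: "PRA n f \<Longrightarrow> PRA n (\<lambda>xs. hd_c (f xs))"
  unfolding hd_c_def by (intro PRA_if PRR_eq PRA_const PRA_pf PRA_sub)

lemma PRA_tl_c: "PRA n f \<Longrightarrow> PRA n (\<lambda>xs. tl_c (f xs))"
  unfolding tl_c_def by (intro PRA_if PRR_eq PRA_const PRA_ps PRA_sub)

lemma PRA_tlk2: "PRA (Suc (Suc 0)) (\<lambda>xs. tlk (xs ! 0) (xs ! 1))"
proof -
  have "PRA (Suc (Suc 0)) (\<lambda>ys. (\<lambda>y xs. tlk y (xs ! 0)) (hd ys) (tl ys))"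
    by (rule PRA_rec[where f = "\<lambda>xs. xs ! 0" and g = "\<lambda>ys. tl_c (ys ! 1)"])
       (auto intro!: PRA_proj PRA_tl_c simp: tlk_Suc)
  then show ?thesis by (rule PRA_cong) (auto simp: length_Suc_conv)
qed

lemma PRA_tlk: "PRA n f \<Longrightarrow> PRA n g \<Longrightarrow> PRA n (\<lambda>xs. tlk (f xs) (g xs))"
  by (rule PRA_bin[OF PRA_tlk2])

lemma PRA_nth_c: "PRA n f \<Longrightarrow> PRA n g \<Longrightarrow> PRA n (\<lambda>xs. nth_c (f xs) (g xs))"
  unfolding nth_c_def by (intro PRA_hd_c PRA_tlk)

lemma PRA_lcode: "LPRA n k G \<Longrightarrow> PRA n (\<lambda>xs. lcode (G xs))"
proof (induction k arbitrary: G)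
  case 0
  then have "\<And>xs. length xs = n \<Longrightarrow> G xs = []" by (auto simp: LPRA_def)
  then show ?case by (intro PRA_cong[OF PRA_const[of n 0]]) simp
next
  case (Suc k)
  have L: "LPRA n k (\<lambda>xs. tl (G xs))"
    using Suc.prems unfolding LPRA_def
  proof (intro conjI allI impI)
    fix i assume A: "(\<forall>xs. length xs = n \<longrightarrow> length (G xs) = Suc k) \<and> (\<forall>i<Suc k. PRA n (\<lambda>xs. G xs ! i))"
      and "i < k"
    then have "PRA n (\<lambda>xs. G xs ! Suc i)" by auto
    then show "PRA n (\<lambda>xs. tl (G xs) ! i)" by (rule PRA_cong) (use A \<open>i < k\<close> in \<open>simp add: nth_tl\<close>)
  qed auto
  have h: "PRA n (\<lambda>xs. G xs ! 0)" using Suc.prems by (auto simp: LPRA_def)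
  have "PRA n (\<lambda>xs. cons_c (G xs ! 0) (lcode (tl (G xs))))"
    by (intro PRA_cons_c h Suc.IH L)
  then show ?case
  proof (rule PRA_cong)
    fix xs :: "nat list" assume "length xs = n"
    then have "length (G xs) = Suc k" using Suc.prems by (auto simp: LPRA_def)
    then show "cons_c (G xs ! 0) (lcode (tl (G xs))) = lcode (G xs)"
      by (cases "G xs") auto
  qed
qed


lemma PRR_subst: "PRR k P \<Longrightarrow> LPRA n k G \<Longrightarrow> PRR n (\<lambda>xs. P (G xs))"
  unfolding PRR_def by (drule (1) PRA_compL) simp

lemma sig0_iff: "sigma_rel 0 k P \<longleftrightarrow> PRR k P"
proof
  assume "sigma_rel 0 k P"
  then obtain f where f: "PR k f" "\<forall>xs. length xs = k \<longrightarrow> (P xs \<longleftrightarrow> f xs \<noteq> 0)" by auto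
  have "PRR k (\<lambda>xs. f xs \<noteq> 0)" by (rule PRR_nz[OF PR_PRA[OF f(1)]])
  then show "PRR k P" by (rule PRR_cong) (use f in auto)
next
  assume "PRR k P"
  then obtain g where g: "PR k g" "\<forall>xs. length xs = k \<longrightarrow> (if P xs then 1 else 0) = g xs"
    unfolding PRR_def PRA_def by auto
  have "\<forall>xs. length xs = k \<longrightarrow> (P xs \<longleftrightarrow> g xs \<noteq> 0)"
  proof (intro allI impI)
    fix xs :: "nat list" assume "length xs = k"
    then have "(if P xs then 1 else 0) = g xs" using g by auto
    then show "P xs \<longleftrightarrow> g xs \<noteq> 0" by (auto split: if_splits)
  qed
  then show "sigma_rel 0 k P" using g(1) by auto
qed

lemma sig_cong: "sigma_rel m k P \<Longrightarrow> (\<And>xs. length xs = k \<Longrightarrow> P xs = Q xs) \<Longrightarrow> sigma_rel m k Q"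
  by (cases m) auto

lemma sig_Suc_iff: "sigma_rel (Suc m) k P \<longleftrightarrow> (\<exists>Q. sigma_rel m (Suc k) (\<lambda>ys. \<not> Q ys) \<and>
      (\<forall>xs. length xs = k \<longrightarrow> (P xs \<longleftrightarrow> (\<exists>y. Q (y # xs)))))"
  by simp

lemma sig_SucI: "sigma_rel m (Suc k) (\<lambda>ys. \<not> Q ys) \<Longrightarrow>
   \<forall>xs. length xs = k \<longrightarrow> (P xs \<longleftrightarrow> (\<exists>y. Q (y # xs))) \<Longrightarrow> sigma_rel (Suc m) k P"
  by auto

definition closed :: "nat \<Rightarrow> bool" where
"closed m \<longleftrightarrow>
 (\<forall>k n P G. sigma_rel m k P \<longrightarrow> LPRA n k G \<longrightarrow> sigma_rel m n (\<lambda>xs. P (G xs))) \<and>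
 (\<forall>n P Q. sigma_rel m n P \<longrightarrow> sigma_rel m n Q \<longrightarrow> sigma_rel m n (\<lambda>xs. P xs \<and> Q xs)) \<and>
 (\<forall>n P Q. sigma_rel m n P \<longrightarrow> sigma_rel m n Q \<longrightarrow> sigma_rel m n (\<lambda>xs. P xs \<or> Q xs)) \<and>
 (\<forall>n P b. sigma_rel m (Suc n) (\<lambda>ys. P (hd ys) (tl ys)) \<longrightarrow> PRA n b \<longrightarrow> sigma_rel m n (\<lambda>xs. \<forall>y<b xs. P y xs)) \<and>
 (\<forall>n P b. sigma_rel m (Suc n) (\<lambda>ys. P (hd ys) (tl ys)) \<longrightarrow> PRA n b \<longrightarrow> sigma_rel m n (\<lambda>xs. \<exists>y<b xs. P y xs)) \<and>
 (\<forall>n P. PRR n P \<longrightarrow> sigma_rel m n P)"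

lemma closed_0: "closed 0"
  unfolding closed_def sig0_iff
  apply (intro conjI allI impI)
  subgoal by (rule PRR_subst)
  subgoal by (rule PRR_and)
  subgoal by (rule PRR_or)
  subgoal by (rule PRR_ball)
  subgoal by (rule PRR_bex)
  subgoal by assumption
  done

lemma LPRA_G1: "PRA (Suc n) f \<Longrightarrow> LPRA (Suc n) (Suc n) (\<lambda>ys. f ys # tl ys)"
  by (intro LPRA_cons LPRA_tl1)

lemma LPRA_G2: "PRA (Suc n) f \<Longrightarrow> PRA (Suc n) g \<Longrightarrow> LPRA (Suc n) (Suc (Suc n)) (\<lambda>ys. f ys # g ys # tl ys)"
  by (intro LPRA_cons LPRA_tl1)

lemma LPRA_tl2: "LPRA (Suc (Suc n)) n (\<lambda>ys. tl (tl ys))"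
  by (rule LPRA_tl[OF LPRA_tl1])

lemma PRA_hd_tl: "PRA (Suc (Suc n)) (\<lambda>ys. hd (tl ys))"
  by (rule PRA_hd2)

context
  fixes m :: nat
  assumes cl: "closed m"
begin

lemma c_subst: "sigma_rel m k P \<Longrightarrow> LPRA n k G \<Longrightarrow> sigma_rel m n (\<lambda>xs. P (G xs))"
  using cl unfolding closed_def by blast
lemma c_and: "sigma_rel m n P \<Longrightarrow> sigma_rel m n Q \<Longrightarrow> sigma_rel m n (\<lambda>xs. P xs \<and> Q xs)"
  using cl unfolding closed_def by blast
lemma c_or: "sigma_rel m n P \<Longrightarrow> sigma_rel m n Q \<Longrightarrow> sigma_rel m n (\<lambda>xs. P xs \<or> Q xs)"
  using cl unfolding closed_def by blast
lemma c_ball: "sigma_rel m (Suc n) (\<lambda>ys. P (hd ys) (tl ys)) \<Longrightarrow> PRA n b \<Longrightarrow> sigma_rel m n (\<lambda>xs. \<forall>y<b xs. P y xs)"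
  using cl unfolding closed_def by blast
lemma c_bex: "sigma_rel m (Suc n) (\<lambda>ys. P (hd ys) (tl ys)) \<Longrightarrow> PRA n b \<Longrightarrow> sigma_rel m n (\<lambda>xs. \<exists>y<b xs. P y xs)"
  using cl unfolding closed_def by blast
lemma c_PRR: "PRR n P \<Longrightarrow> sigma_rel m n P"
  using cl unfolding closed_def by blast

lemma s_subst:
  assumes P: "sigma_rel (Suc m) k P" and G: "LPRA n k G"
  shows "sigma_rel (Suc m) n (\<lambda>xs. P (G xs))"
proof -
  obtain Q where Q: "sigma_rel m (Suc k) (\<lambda>ys. \<not> Q ys)" "\<forall>xs. length xs = k \<longrightarrow> (P xs \<longleftrightarrow> (\<exists>y. Q (y # xs)))"
    using P by auto
  have G': "LPRA (Suc n) (Suc k) (\<lambda>ys. hd ys # G (tl ys))"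
    by (intro LPRA_cons PRA_hd LPRA_tl G)
  have "sigma_rel m (Suc n) (\<lambda>ys. \<not> Q (hd ys # G (tl ys)))"
    by (rule c_subst[OF Q(1) G'])
  moreover have "\<forall>xs. length xs = n \<longrightarrow> (P (G xs) \<longleftrightarrow> (\<exists>y. Q (hd (y # xs) # G (tl (y # xs)))))"
    using Q(2) G by (auto simp: LPRA_def)
  ultimately show ?thesis by (rule sig_SucI[where Q = "\<lambda>ys. Q (hd ys # G (tl ys))"])
qed

lemma s_and:
  assumes P1: "sigma_rel (Suc m) n P1" and P2: "sigma_rel (Suc m) n P2"
  shows "sigma_rel (Suc m) n (\<lambda>xs. P1 xs \<and> P2 xs)"
proof -
  obtain Q1 where Q1: "sigma_rel m (Suc n) (\<lambda>ys. \<not> Q1 ys)" "\<forall>xs. length xs = n \<longrightarrow> (P1 xs \<longleftrightarrow> (\<exists>y. Q1 (y # xs)))"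
    using P1 by auto
  obtain Q2 where Q2: "sigma_rel m (Suc n) (\<lambda>ys. \<not> Q2 ys)" "\<forall>xs. length xs = n \<longrightarrow> (P2 xs \<longleftrightarrow> (\<exists>y. Q2 (y # xs)))"
    using P2 by auto
  have "sigma_rel m (Suc n) (\<lambda>ys. \<not> Q1 (pf (hd ys) # tl ys) \<or> \<not> Q2 (ps (hd ys) # tl ys))"
    by (intro c_or c_subst[OF Q1(1)] c_subst[OF Q2(1)] LPRA_G1 PRA_pf PRA_ps PRA_hd)
  then have "sigma_rel m (Suc n) (\<lambda>ys. \<not> (Q1 (pf (hd ys) # tl ys) \<and> Q2 (ps (hd ys) # tl ys)))"
    by (rule sig_cong) auto
  moreover have "\<forall>xs. length xs = n \<longrightarrow> (P1 xs \<and> P2 xs \<longleftrightarrow>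
      (\<exists>y. Q1 (pf (hd (y # xs)) # tl (y # xs)) \<and> Q2 (ps (hd (y # xs)) # tl (y # xs))))"
  proof (intro allI impI iffI)
    fix xs :: "nat list" assume "length xs = n" "P1 xs \<and> P2 xs"
    then obtain y1 y2 where "Q1 (y1 # xs)" "Q2 (y2 # xs)" using Q1 Q2 by blast
    then show "\<exists>y. Q1 (pf (hd (y # xs)) # tl (y # xs)) \<and> Q2 (ps (hd (y # xs)) # tl (y # xs))"
      by (intro exI[of _ "pe y1 y2"]) simp
  next
    fix xs :: "nat list" assume "length xs = n"
      "\<exists>y. Q1 (pf (hd (y # xs)) # tl (y # xs)) \<and> Q2 (ps (hd (y # xs)) # tl (y # xs))"
    then show "P1 xs \<and> P2 xs" using Q1 Q2 by auto
  qed
  ultimately show ?thesis by (rule sig_SucI[where Q = "\<lambda>ys. Q1 (pf (hd ys) # tl ys) \<and> Q2 (ps (hd ys) # tl ys)"])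
qed

lemma s_or:
  assumes P1: "sigma_rel (Suc m) n P1" and P2: "sigma_rel (Suc m) n P2"
  shows "sigma_rel (Suc m) n (\<lambda>xs. P1 xs \<or> P2 xs)"
proof -
  obtain Q1 where Q1: "sigma_rel m (Suc n) (\<lambda>ys. \<not> Q1 ys)" "\<forall>xs. length xs = n \<longrightarrow> (P1 xs \<longleftrightarrow> (\<exists>y. Q1 (y # xs)))"
    using P1 by auto
  obtain Q2 where Q2: "sigma_rel m (Suc n) (\<lambda>ys. \<not> Q2 ys)" "\<forall>xs. length xs = n \<longrightarrow> (P2 xs \<longleftrightarrow> (\<exists>y. Q2 (y # xs)))"
    using P2 by auto
  have "sigma_rel m (Suc n) (\<lambda>ys. \<not> Q1 ys \<and> \<not> Q2 ys)"
    by (intro c_and Q1(1) Q2(1))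
  then have "sigma_rel m (Suc n) (\<lambda>ys. \<not> (Q1 ys \<or> Q2 ys))"
    by (rule sig_cong) auto
  moreover have "\<forall>xs. length xs = n \<longrightarrow> (P1 xs \<or> P2 xs \<longleftrightarrow> (\<exists>y. Q1 (y # xs) \<or> Q2 (y # xs)))"
    using Q1 Q2 by blast
  ultimately show ?thesis by (rule sig_SucI[where Q = "\<lambda>ys. Q1 ys \<or> Q2 ys"])
qed

lemma s_ex:
  assumes P: "sigma_rel (Suc m) (Suc n) (\<lambda>ys. P (hd ys) (tl ys))"
  shows "sigma_rel (Suc m) n (\<lambda>xs. \<exists>y. P y xs)"
proof -
  obtain Q where Q: "sigma_rel m (Suc (Suc n)) (\<lambda>ys. \<not> Q ys)"
    "\<forall>ys. length ys = Suc n \<longrightarrow> (P (hd ys) (tl ys) \<longleftrightarrow> (\<exists>y. Q (y # ys)))"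
    using P by auto
  have "sigma_rel m (Suc n) (\<lambda>ws. \<not> Q (ps (hd ws) # pf (hd ws) # tl ws))"
    by (intro c_subst[OF Q(1)] LPRA_G2 PRA_pf PRA_ps PRA_hd)
  moreover have "\<forall>xs. length xs = n \<longrightarrow> ((\<exists>y. P y xs) \<longleftrightarrow>
      (\<exists>y. Q (ps (hd (y # xs)) # pf (hd (y # xs)) # tl (y # xs))))"
  proof (intro allI impI iffI)
    fix xs :: "nat list" assume l: "length xs = n" and "\<exists>y. P y xs"
    then obtain y where "P y xs" by blast
    then obtain z where "Q (z # y # xs)" using Q(2)[rule_format, of "y # xs"] l by auto
    then show "\<exists>p. Q (ps (hd (p # xs)) # pf (hd (p # xs)) # tl (p # xs))"
      by (intro exI[of _ "pe y z"]) simp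
  next
    fix xs :: "nat list" assume l: "length xs = n"
      and "\<exists>p. Q (ps (hd (p # xs)) # pf (hd (p # xs)) # tl (p # xs))"
    then obtain p where "Q (ps p # pf p # xs)" by auto
    then have "P (pf p) xs" using Q(2)[rule_format, of "pf p # xs"] l by auto
    then show "\<exists>y. P y xs" by blast
  qed
  ultimately show ?thesis by (rule sig_SucI[where Q = "\<lambda>ws. Q (ps (hd ws) # pf (hd ws) # tl ws)"])
qed

lemma s_bex:
  assumes P: "sigma_rel (Suc m) (Suc n) (\<lambda>ys. P (hd ys) (tl ys))" and b: "PRA n b"
  shows "sigma_rel (Suc m) n (\<lambda>xs. \<exists>y<b xs. P y xs)"
proof -
  obtain Q where Q: "sigma_rel m (Suc (Suc n)) (\<lambda>ys. \<not> Q ys)"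
    "\<forall>ys. length ys = Suc n \<longrightarrow> (P (hd ys) (tl ys) \<longleftrightarrow> (\<exists>y. Q (y # ys)))"
    using P by auto
  have "sigma_rel m (Suc (Suc n)) (\<lambda>ws. \<not> Q (hd (tl ws) # hd ws # tl (tl ws)))"
    by (intro c_subst[OF Q(1)] LPRA_cons PRA_hd PRA_hd_tl LPRA_tl2)
  then have "sigma_rel m (Suc n) (\<lambda>zs. \<forall>y<b (tl zs). \<not> Q (hd zs # y # tl zs))"
    by (rule c_ball) (rule PRA_tl[OF b])
  then have "sigma_rel m (Suc n) (\<lambda>zs. \<not> (\<exists>y<b (tl zs). Q (hd zs # y # tl zs)))"
    by (rule sig_cong) auto
  moreover have "\<forall>xs. length xs = n \<longrightarrow> ((\<exists>y<b xs. P y xs) \<longleftrightarrow>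
      (\<exists>z. \<exists>y<b (tl (z # xs)). Q (hd (z # xs) # y # tl (z # xs))))"
  proof (intro allI impI)
    fix xs :: "nat list" assume l: "length xs = n"
    have "P y xs \<longleftrightarrow> (\<exists>z. Q (z # y # xs))" for y using Q(2)[rule_format, of "y # xs"] l by simp
    then have "\<forall>y. P y xs \<longleftrightarrow> (\<exists>z. Q (z # y # xs))" by blast
    then show "(\<exists>y<b xs. P y xs) \<longleftrightarrow> (\<exists>z. \<exists>y<b (tl (z # xs)). Q (hd (z # xs) # y # tl (z # xs)))"
      by auto
  qed
  ultimately show ?thesis by (rule sig_SucI[where Q = "\<lambda>zs. \<exists>y<b (tl zs). Q (hd zs # y # tl zs)"])
qed

lemma s_ball:
  assumes P: "sigma_rel (Suc m) (Suc n) (\<lambda>ys. P (hd ys) (tl ys))" and b: "PRA n b"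
  shows "sigma_rel (Suc m) n (\<lambda>xs. \<forall>y<b xs. P y xs)"
proof -
  obtain Q where Q: "sigma_rel m (Suc (Suc n)) (\<lambda>ys. \<not> Q ys)"
    "\<forall>ys. length ys = Suc n \<longrightarrow> (P (hd ys) (tl ys) \<longleftrightarrow> (\<exists>y. Q (y # ys)))"
    using P by auto
  have "sigma_rel m (Suc (Suc n)) (\<lambda>ws. \<not> Q (nth_c (hd (tl ws)) (hd ws) # hd ws # tl (tl ws)))"
    by (intro c_subst[OF Q(1)] LPRA_cons PRA_nth_c PRA_hd PRA_hd_tl LPRA_tl2)
  then have "sigma_rel m (Suc n) (\<lambda>zs. \<exists>y<b (tl zs). \<not> Q (nth_c (hd zs) y # y # tl zs))"
    by (rule c_bex) (rule PRA_tl[OF b])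
  then have "sigma_rel m (Suc n) (\<lambda>zs. \<not> (\<forall>y<b (tl zs). Q (nth_c (hd zs) y # y # tl zs)))"
    by (rule sig_cong) auto
  moreover have "\<forall>xs. length xs = n \<longrightarrow> ((\<forall>y<b xs. P y xs) \<longleftrightarrow>
      (\<exists>s. \<forall>y<b (tl (s # xs)). Q (nth_c (hd (s # xs)) y # y # tl (s # xs))))"
  proof (intro allI impI)
    fix xs :: "nat list" assume l: "length xs = n"
    have "P y xs \<longleftrightarrow> (\<exists>z. Q (z # y # xs))" for y using Q(2)[rule_format, of "y # xs"] l by simp
    then have PQ: "\<forall>y. P y xs \<longleftrightarrow> (\<exists>z. Q (z # y # xs))" by blast
    show "(\<forall>y<b xs. P y xs) \<longleftrightarrow> (\<exists>s. \<forall>y<b (tl (s # xs)). Q (nth_c (hd (s # xs)) y # y # tl (s # xs)))"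
    proof
      assume "\<forall>y<b xs. P y xs"
      then have "\<forall>y. \<exists>z. y < b xs \<longrightarrow> Q (z # y # xs)" using PQ by blast
      from choice[OF this] obtain zf where zf: "\<forall>y. y < b xs \<longrightarrow> Q (zf y # y # xs)" by blast
      have "\<forall>y<b xs. Q (nth_c (lcode (map zf [0..<b xs])) y # y # xs)"
        using zf by (simp add: nth_c_lcode)
      then show "\<exists>s. \<forall>y<b (tl (s # xs)). Q (nth_c (hd (s # xs)) y # y # tl (s # xs))"
        by (intro exI[of _ "lcode (map zf [0..<b xs])"]) simp
    next
      assume "\<exists>s. \<forall>y<b (tl (s # xs)). Q (nth_c (hd (s # xs)) y # y # tl (s # xs))"
      then show "\<forall>y<b xs. P y xs" using PQ by auto
    qed
  qed
  ultimately show ?thesis by (rule sig_SucI[where Q = "\<lambda>zs. \<forall>y<b (tl zs). Q (nth_c (hd zs) y # y # tl zs)"])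
qed

lemma s_PRR:
  assumes P: "PRR n P"
  shows "sigma_rel (Suc m) n P"
proof -
  have "sigma_rel m (Suc n) (\<lambda>ys. \<not> P (tl ys))"
    by (intro c_PRR PRR_not PRR_subst[OF P] LPRA_tl1)
  moreover have "\<forall>xs. length xs = n \<longrightarrow> (P xs \<longleftrightarrow> (\<exists>y::nat. P (tl (y # xs))))" by simp
  ultimately show ?thesis by (rule sig_SucI[where Q = "\<lambda>ys. P (tl ys)"])
qed

lemma closed_Suc: "closed (Suc m)"
  unfolding closed_def using s_subst s_and s_or s_ball s_bex s_PRR by blast

end

lemma closed_all: "closed m"
  by (induction m) (auto intro: closed_0 closed_Suc)

lemma sig_subst: "sigma_rel m k P \<Longrightarrow> LPRA n k G \<Longrightarrow> sigma_rel m n (\<lambda>xs. P (G xs))"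
  by (rule c_subst[OF closed_all])
lemma sig_and: "sigma_rel m n P \<Longrightarrow> sigma_rel m n Q \<Longrightarrow> sigma_rel m n (\<lambda>xs. P xs \<and> Q xs)"
  by (rule c_and[OF closed_all])
lemma sig_or: "sigma_rel m n P \<Longrightarrow> sigma_rel m n Q \<Longrightarrow> sigma_rel m n (\<lambda>xs. P xs \<or> Q xs)"
  by (rule c_or[OF closed_all])
lemma sig_ball: "sigma_rel m (Suc n) (\<lambda>ys. P (hd ys) (tl ys)) \<Longrightarrow> PRA n b \<Longrightarrow> sigma_rel m n (\<lambda>xs. \<forall>y<b xs. P y xs)"
  by (rule c_ball[OF closed_all])
lemma sig_bex: "sigma_rel m (Suc n) (\<lambda>ys. P (hd ys) (tl ys)) \<Longrightarrow> PRA n b \<Longrightarrow> sigma_rel m n (\<lambda>xs. \<exists>y<b xs. P y xs)"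
  by (rule c_bex[OF closed_all])
lemma sig_PRR: "PRR n P \<Longrightarrow> sigma_rel m n P"
  by (rule c_PRR[OF closed_all])
lemma sig_ex: "sigma_rel (Suc m) (Suc n) (\<lambda>ys. P (hd ys) (tl ys)) \<Longrightarrow> sigma_rel (Suc m) n (\<lambda>xs. \<exists>y. P y xs)"
  by (rule s_ex[OF closed_all])


datatype prc = Zc | Sc | Pc nat | Cc prc "prc list" | Rc prc prc

definition hd0 :: "nat list \<Rightarrow> nat" where "hd0 xs = (case xs of [] \<Rightarrow> 0 | a # _ \<Rightarrow> a)"
definition nth0 :: "nat list \<Rightarrow> nat \<Rightarrow> nat" where "nth0 xs i = (if i < length xs then xs ! i else 0)"

fun evp :: "prc \<Rightarrow> nat list \<Rightarrow> nat" where
  "evp Zc xs = 0"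
| "evp Sc xs = Suc (hd0 xs)"
| "evp (Pc i) xs = nth0 xs i"
| "evp (Cc f gs) xs = evp f (map (\<lambda>g. evp g xs) gs)"
| "evp (Rc f g) xs = rec_nat (evp f (tl xs)) (\<lambda>y r. evp g (y # r # tl xs)) (hd0 xs)"

lemma PR_evp: "PR n f \<Longrightarrow> \<exists>c. \<forall>xs. length xs = n \<longrightarrow> evp c xs = f xs"
proof (induction rule: PR.induct)
  case (zero n) then show ?case by (intro exI[of _ Zc]) simp
next
  case succ then show ?case by (intro exI[of _ Sc]) (auto simp: hd0_def length_Suc_conv)
next
  case (proj i n) then show ?case by (intro exI[of _ "Pc i"]) (simp add: nth0_def)
next
  case (comp m f gs n)
  obtain cf where cf: "\<forall>xs. length xs = m \<longrightarrow> evp cf xs = f xs" using comp.IH by blast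
  have "\<forall>g\<in>set gs. \<exists>c. \<forall>xs. length xs = n \<longrightarrow> evp c xs = g xs" using comp.IH(2) by blast
  then obtain cg where cg: "\<forall>g\<in>set gs. \<forall>xs. length xs = n \<longrightarrow> evp (cg g) xs = g xs"
    by (rule bchoice[THEN exE]) blast
  show ?case
  proof (intro exI[of _ "Cc cf (map cg gs)"] allI impI)
    fix xs :: "nat list" assume l: "length xs = n"
    have e: "map (\<lambda>g. evp g xs) (map cg gs) = map (\<lambda>g. g xs) gs" using cg l by simp
    have "evp (Cc cf (map cg gs)) xs = evp cf (map (\<lambda>g. g xs) gs)" by (simp only: evp.simps e)
    then show "evp (Cc cf (map cg gs)) xs = f (map (\<lambda>g. g xs) gs)"
      using cf comp.hyps(2) by simp
  qed
next
  case (prec n f g)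
  obtain cf where cf: "\<forall>xs. length xs = n \<longrightarrow> evp cf xs = f xs" using prec.IH by blast
  obtain cg where cg: "\<forall>xs. length xs = Suc (Suc n) \<longrightarrow> evp cg xs = g xs" using prec.IH by blast
  show ?case
  proof (intro exI[of _ "Rc cf cg"] allI impI)
    fix xs :: "nat list" assume l: "length xs = Suc n"
    then have "hd0 xs = hd xs" by (auto simp: hd0_def length_Suc_conv)
    moreover have "evp cf (tl xs) = f (tl xs)" using cf l by simp
    moreover have "(\<lambda>y r. evp cg (y # r # tl xs)) = (\<lambda>y r. g (y # r # tl xs))" using cg l by simp
    ultimately show "evp (Rc cf cg) xs = rec_nat (f (tl xs)) (\<lambda>y r. g (y # r # tl xs)) (hd xs)"
      by simp
  qed
qed

fun enc :: "prc \<Rightarrow> nat" where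
  "enc Zc = pe 0 0"
| "enc Sc = pe 1 0"
| "enc (Pc i) = pe 2 i"
| "enc (Cc f gs) = pe 3 (pe (enc f) (lcode (map enc gs)))"
| "enc (Rc f g) = pe 4 (pe (enc f) (enc g))"

definition trip :: "nat \<Rightarrow> nat \<Rightarrow> nat \<Rightarrow> nat" where "trip a b c = pe a (pe b c)"

lemma trip_parts[simp]: "pf (trip a b c) = a" "pf (ps (trip a b c)) = b" "ps (ps (trip a b c)) = c"
  by (simp_all add: trip_def)

definition JustM :: "(nat \<Rightarrow> bool) \<Rightarrow> nat \<Rightarrow> nat \<Rightarrow> nat \<Rightarrow> bool" where
  "JustM M e z v \<longleftrightarrow>
    (pf e = 0 \<and> v = 0) \<or> (pf e = 1 \<and> v = Suc (hd_c z)) \<or> (pf e = 2 \<and> v = nth_c z (ps e)) \<or>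
    (pf e = 3 \<and> (\<exists>w. (\<forall>j<Suc (ps (ps e)). (tlk j (ps (ps e)) = 0 \<longleftrightarrow> tlk j w = 0) \<and>
         (tlk j (ps (ps e)) \<noteq> 0 \<longrightarrow> M (trip (nth_c (ps (ps e)) j) z (nth_c w j)))) \<and>
         M (trip (pf (ps e)) w v))) \<or>
    (pf e = 4 \<and> (\<exists>s. M (trip (pf (ps e)) (tl_c z) (nth_c s 0)) \<and>
         (\<forall>y<hd_c z. M (trip (ps (ps e)) (cons_c y (cons_c (nth_c s y) (tl_c z))) (nth_c s (Suc y)))) \<and>
         v = nth_c s (hd_c z)))"

lemma JustM_mono: "JustM M e z v \<Longrightarrow> (\<And>u. M u \<Longrightarrow> M' u) \<Longrightarrow> JustM M' e z v"
  unfolding JustM_def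
  apply (elim disjE)
  subgoal by (intro disjI1) simp
  subgoal by (intro disjI2 disjI1) simp
  subgoal by (intro disjI2 disjI1) simp
  subgoal by (intro disjI2 disjI1) (elim conjE exE, intro conjI exI, auto)
  subgoal by (intro disjI2) (elim conjE exE, intro conjI exI, auto)
  done

definition mem :: "nat \<Rightarrow> nat \<Rightarrow> bool" where
  "mem t T \<longleftrightarrow> (\<exists>i<Suc T. tlk i T \<noteq> 0 \<and> nth_c T i = t)"

lemma mem_lcode: "mem t (lcode L) \<longleftrightarrow> t \<in> set L"
proof
  assume "mem t (lcode L)"
  then obtain i where "tlk i (lcode L) \<noteq> 0" "nth_c (lcode L) i = t" unfolding mem_def by blast
  then show "t \<in> set L" by (auto simp: tlk_lcode_0_iff nth_c_lcode)
next
  assume "t \<in> set L"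
  then obtain i where i: "i < length L" "L ! i = t" by (auto simp: in_set_conv_nth)
  then have "i < Suc (lcode L)" using length_le_lcode[of L] by simp
  then show "mem t (lcode L)" unfolding mem_def using i by (auto simp: tlk_lcode_0_iff nth_c_lcode)
qed

definition Ev :: "nat \<Rightarrow> nat \<Rightarrow> nat \<Rightarrow> bool" where
  "Ev e z v \<longleftrightarrow> (\<exists>T. mem (trip e z v) T \<and> (\<forall>i<Suc T. tlk i T \<noteq> 0 \<longrightarrow>
      JustM (\<lambda>u. mem u T) (pf (nth_c T i)) (pf (ps (nth_c T i))) (ps (ps (nth_c T i)))))"

lemma hd_c_lcode0: "hd_c (lcode xs) = hd0 xs"
  by (simp add: hd_c_lcode hd0_def)

lemma nth_c_lcode0: "nth_c (lcode xs) i = nth0 xs i"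
  by (simp add: nth_c_lcode nth0_def)

lemma soundness:
  assumes cl: "\<forall>u. M u \<longrightarrow> JustM M (pf u) (pf (ps u)) (ps (ps u))"
  shows "\<forall>xs v. M (trip (enc c) (lcode xs) v) \<longrightarrow> v = evp c xs"
proof -
  have J: "JustM M e z v" if "M (trip e z v)" for e z v
  proof -
    have "JustM M (pf (trip e z v)) (pf (ps (trip e z v))) (ps (ps (trip e z v)))"
      using cl that by blast
    then show ?thesis by simp
  qed
  show ?thesis
  proof (induction c)
  case Zc
  show ?case by (auto simp: JustM_def dest!: J)
next
  case Sc
  show ?case by (auto simp: JustM_def hd_c_lcode0 dest!: J)
next
  case (Pc i)
  show ?case by (auto simp: JustM_def nth_c_lcode0 dest!: J)
next
  case (Cc f gs)
  show ?case
  proof (intro allI impI)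
    fix xs v assume Mt: "M (trip (enc (Cc f gs)) (lcode xs) v)"
    define gl where "gl = lcode (map enc gs)"
    have "JustM M (enc (Cc f gs)) (lcode xs) v" using J Mt by blast
    then obtain w where w: "\<forall>j<Suc gl. (tlk j gl = 0 \<longleftrightarrow> tlk j w = 0) \<and>
         (tlk j gl \<noteq> 0 \<longrightarrow> M (trip (nth_c gl j) (lcode xs) (nth_c w j)))"
       "M (trip (enc f) w v)"
      unfolding JustM_def gl_def by auto
    obtain ws where ws: "w = lcode ws" using lcode_surj by blast
    have lg: "length gs \<le> gl" using length_le_lcode[of "map enc gs"] by (simp add: gl_def)
    have eq: "length gs \<le> j \<longleftrightarrow> length ws \<le> j" if "j < Suc gl" for j
      using w(1) that by (simp add: gl_def ws tlk_lcode_0_iff)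
    have len: "length ws = length gs"
    proof (rule ccontr)
      assume "length ws \<noteq> length gs"
      moreover have "length ws \<le> length gs" using eq[of "length gs"] lg by simp
      ultimately have "length ws < length gs" by simp
      then show False using eq[of "length ws"] lg by simp
    qed
    have "ws ! j = evp (gs ! j) xs" if j: "j < length gs" for j
    proof -
      have "j < Suc gl" using j lg by simp
      moreover have "tlk j gl \<noteq> 0" using j by (simp add: gl_def tlk_lcode_0_iff)
      ultimately have "M (trip (nth_c gl j) (lcode xs) (nth_c w j))" using w(1) by blast
      then have "M (trip (enc (gs ! j)) (lcode xs) (ws ! j))"
        using j len by (simp add: gl_def ws nth_c_lcode)
      then show ?thesis using Cc.IH(2)[of "gs ! j"] j by simp
    qed
    then have "ws = map (\<lambda>g. evp g xs) gs" using len by (intro nth_equalityI) auto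
    then show "v = evp (Cc f gs) xs" using Cc.IH(1) w(2) ws by simp
  qed
next
  case (Rc f g)
  show ?case
  proof (intro allI impI)
    fix xs v assume Mt: "M (trip (enc (Rc f g)) (lcode xs) v)"
    have "JustM M (enc (Rc f g)) (lcode xs) v" using J Mt by blast
    then obtain s where s: "M (trip (enc f) (lcode (tl xs)) (nth_c s 0))"
      "\<forall>y<hd0 xs. M (trip (enc g) (lcode (y # nth_c s y # tl xs)) (nth_c s (Suc y)))"
      "v = nth_c s (hd0 xs)"
      unfolding JustM_def by (auto simp: tl_c_lcode hd_c_lcode0)
    have s0: "nth_c s 0 = evp f (tl xs)" using Rc.IH(1) s(1) by blast
    have sS: "nth_c s (Suc y) = evp g (y # nth_c s y # tl xs)" if "y < hd0 xs" for y
      using Rc.IH(2) s(2) that by blast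
    have "y \<le> hd0 xs \<Longrightarrow> nth_c s y = rec_nat (evp f (tl xs)) (\<lambda>y r. evp g (y # r # tl xs)) y" for y
      by (induction y) (simp_all add: s0 sS)
    then show "v = evp (Rc f g) xs" using s(3) by simp
  qed
qed
qed

definition Good :: "nat list \<Rightarrow> bool" where
  "Good L \<longleftrightarrow> (\<forall>u\<in>set L. JustM (\<lambda>u. u \<in> set L) (pf u) (pf (ps u)) (ps (ps u)))"

lemma Good_append: "Good L1 \<Longrightarrow> Good L2 \<Longrightarrow> Good (L1 @ L2)"
  unfolding Good_def by (auto elim!: JustM_mono)

lemma Good_concat: "\<forall>L\<in>set Ls. Good L \<Longrightarrow> Good (concat Ls)"
proof (induction Ls)
  case Nil then show ?case by (simp add: Good_def)
next
  case (Cons L Ls) then show ?case by (simp add: Good_append)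
qed

lemma Good_cons: "JustM (\<lambda>u. u \<in> set (t # L)) (pf t) (pf (ps t)) (ps (ps t)) \<Longrightarrow> Good L \<Longrightarrow> Good (t # L)"
  unfolding Good_def by (auto elim!: JustM_mono)

lemma completeness: "\<forall>xs. \<exists>L. trip (enc c) (lcode xs) (evp c xs) \<in> set L \<and> Good L"
proof (induction c)
  case Zc
  show ?case by (auto intro!: exI[of _ "[trip (enc Zc) (lcode _) 0]"] Good_cons simp: Good_def JustM_def)
next
  case Sc
  show ?case by (auto intro!: exI[of _ "[trip (enc Sc) (lcode _) (Suc (hd0 _))]"] Good_cons
      simp: Good_def JustM_def hd_c_lcode0)
next
  case (Pc i)
  show ?case by (auto intro!: exI[of _ "[trip (enc (Pc i)) (lcode _) (nth0 _ i)]"] Good_cons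
      simp: Good_def JustM_def nth_c_lcode0)
next
  case (Cc f gs)
  show ?case
  proof
    fix xs
    define ws where "ws = map (\<lambda>g. evp g xs) gs"
    obtain Lf where Lf: "trip (enc f) (lcode ws) (evp f ws) \<in> set Lf" "Good Lf" using Cc.IH(1) by blast
    have "\<forall>g\<in>set gs. \<exists>L. trip (enc g) (lcode xs) (evp g xs) \<in> set L \<and> Good L" using Cc.IH(2) by blast
    then obtain Fg where Fg: "\<forall>g\<in>set gs. trip (enc g) (lcode xs) (evp g xs) \<in> set (Fg g) \<and> Good (Fg g)"
      by (rule bchoice[THEN exE]) blast
    define t0 where "t0 = trip (enc (Cc f gs)) (lcode xs) (evp (Cc f gs) xs)"
    define L where "L = t0 # Lf @ concat (map Fg gs)"
    define gl where "gl = lcode (map enc gs)"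
    have GL: "Good (Lf @ concat (map Fg gs))" using Lf Fg by (intro Good_append Good_concat) auto
    have "JustM (\<lambda>u. u \<in> set L) (enc (Cc f gs)) (lcode xs) (evp (Cc f gs) xs)"
      unfolding JustM_def
    proof (rule disjI2, rule disjI2, rule disjI2, rule disjI1, intro conjI exI[of _ "lcode ws"] allI impI)
      show "pf (enc (Cc f gs)) = 3" by simp
      show "trip (pf (ps (enc (Cc f gs)))) (lcode ws) (evp (Cc f gs) xs) \<in> set L"
        using Lf by (simp add: L_def ws_def)
      fix j assume "j < Suc (ps (ps (enc (Cc f gs))))"
      show "(tlk j (ps (ps (enc (Cc f gs)))) = 0) = (tlk j (lcode ws) = 0)"
        by (simp add: tlk_lcode_0_iff ws_def)
      assume "tlk j (ps (ps (enc (Cc f gs)))) \<noteq> 0"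
      then have j: "j < length gs" by (simp add: tlk_lcode_0_iff)
      then have "trip (enc (gs ! j)) (lcode xs) (evp (gs ! j) xs) \<in> set (Fg (gs ! j))"
        using Fg by simp
      moreover have "set (Fg (gs ! j)) \<subseteq> set L" using j by (force simp: L_def)
      ultimately show "trip (nth_c (ps (ps (enc (Cc f gs)))) j) (lcode xs) (nth_c (lcode ws) j) \<in> set L"
        using j by (auto simp: nth_c_lcode ws_def)
    qed
    then have "Good L" unfolding L_def using GL by (intro Good_cons) (simp_all add: t0_def L_def)
    moreover have "t0 \<in> set L" by (simp add: L_def)
    ultimately show "\<exists>L. trip (enc (Cc f gs)) (lcode xs) (evp (Cc f gs) xs) \<in> set L \<and> Good L"
      unfolding t0_def by blast
  qed
next
  case (Rc f g)
  show ?case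
  proof
    fix xs
    define m where "m = hd0 xs"
    define r where "r y = rec_nat (evp f (tl xs)) (\<lambda>y r. evp g (y # r # tl xs)) y" for y
    obtain Lf where Lf: "trip (enc f) (lcode (tl xs)) (evp f (tl xs)) \<in> set Lf" "Good Lf" using Rc.IH(1) by blast
    obtain Fg where Fg: "\<forall>ys. trip (enc g) (lcode ys) (evp g ys) \<in> set (Fg ys) \<and> Good (Fg ys)"
      using choice[OF Rc.IH(2)] by blast
    define t0 where "t0 = trip (enc (Rc f g)) (lcode xs) (evp (Rc f g) xs)"
    define L where "L = t0 # Lf @ concat (map (\<lambda>y. Fg (y # r y # tl xs)) [0..<m])"
    define s where "s = lcode (map r [0..<Suc m])"
    have sr: "nth_c s y = r y" if "y \<le> m" for y
      using that by (simp add: s_def nth_c_lcode nth_append less_Suc_eq_le)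
    have GL: "Good (Lf @ concat (map (\<lambda>y. Fg (y # r y # tl xs)) [0..<m]))"
      using Lf Fg by (intro Good_append Good_concat) auto
    have "JustM (\<lambda>u. u \<in> set L) (enc (Rc f g)) (lcode xs) (evp (Rc f g) xs)"
      unfolding JustM_def
    proof (rule disjI2, rule disjI2, rule disjI2, rule disjI2, intro conjI exI[of _ s] allI impI)
      show "pf (enc (Rc f g)) = 4" by simp
      show "trip (pf (ps (enc (Rc f g)))) (tl_c (lcode xs)) (nth_c s 0) \<in> set L"
        using Lf sr[of 0] by (simp add: L_def tl_c_lcode r_def)
      show "evp (Rc f g) xs = nth_c s (hd_c (lcode xs))"
        using sr[of m] by (simp add: hd_c_lcode0 m_def r_def)
      fix y assume y: "y < hd_c (lcode xs)"
      then have y': "y < m" by (simp add: hd_c_lcode0 m_def)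
      have "trip (enc g) (lcode (y # r y # tl xs)) (evp g (y # r y # tl xs)) \<in> set (Fg (y # r y # tl xs))"
        using Fg by blast
      moreover have "set (Fg (y # r y # tl xs)) \<subseteq> set L" using y' by (force simp: L_def)
      moreover have "evp g (y # r y # tl xs) = r (Suc y)" by (simp add: r_def)
      ultimately show "trip (ps (ps (enc (Rc f g)))) (cons_c y (cons_c (nth_c s y) (tl_c (lcode xs))))
           (nth_c s (Suc y)) \<in> set L"
        using sr[of y] sr[of "Suc y"] y' by (simp add: tl_c_lcode subset_iff)
    qed
    then have "Good L" unfolding L_def using GL by (intro Good_cons) (simp_all add: t0_def L_def)
    moreover have "t0 \<in> set L" by (simp add: L_def)
    ultimately show "\<exists>L. trip (enc (Rc f g)) (lcode xs) (evp (Rc f g) xs) \<in> set L \<and> Good L"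
      unfolding t0_def by blast
  qed
qed

lemma Ev_correct: "Ev (enc c) (lcode xs) v \<longleftrightarrow> v = evp c xs"
proof
  assume "Ev (enc c) (lcode xs) v"
  then obtain T where T: "mem (trip (enc c) (lcode xs) v) T" "\<forall>i<Suc T. tlk i T \<noteq> 0 \<longrightarrow>
      JustM (\<lambda>u. mem u T) (pf (nth_c T i)) (pf (ps (nth_c T i))) (ps (ps (nth_c T i)))"
    unfolding Ev_def by blast
  have "\<forall>u. mem u T \<longrightarrow> JustM (\<lambda>u. mem u T) (pf u) (pf (ps u)) (ps (ps u))"
    using T(2) unfolding mem_def by blast
  from soundness[OF this] T(1) show "v = evp c xs" by blast
next
  assume v: "v = evp c xs"
  obtain L where L: "trip (enc c) (lcode xs) (evp c xs) \<in> set L" "Good L" using completeness by blast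
  have memL: "(\<lambda>u. mem u (lcode L)) = (\<lambda>u. u \<in> set L)" by (simp add: mem_lcode)
  have "\<forall>i<Suc (lcode L). tlk i (lcode L) \<noteq> 0 \<longrightarrow>
      JustM (\<lambda>u. mem u (lcode L)) (pf (nth_c (lcode L) i)) (pf (ps (nth_c (lcode L) i))) (ps (ps (nth_c (lcode L) i)))"
    using L(2) unfolding memL Good_def by (auto simp: tlk_lcode_0_iff nth_c_lcode)
  moreover have "mem (trip (enc c) (lcode xs) v) (lcode L)" using L(1) v by (simp add: mem_lcode)
  ultimately show "Ev (enc c) (lcode xs) v" unfolding Ev_def by blast
qed


lemma PRA_trip: "PRA n f \<Longrightarrow> PRA n g \<Longrightarrow> PRA n h \<Longrightarrow> PRA n (\<lambda>xs. trip (f xs) (g xs) (h xs))"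
  unfolding trip_def by (intro PRA_pe)

lemma PRR_mem: "PRA n f \<Longrightarrow> PRA n g \<Longrightarrow> PRR n (\<lambda>xs. mem (f xs) (g xs))"
proof -
  assume f: "PRA n f" and g: "PRA n g"
  have "PRR n (\<lambda>xs. \<exists>i<Suc (g xs). tlk i (g xs) \<noteq> 0 \<and> nth_c (g xs) i = f xs)"
    by (intro PRR_bex PRR_and PRR_neq PRR_eq PRA_tlk PRA_nth_c PRA_hd PRA_tl[OF g] PRA_tl[OF f] PRA_const PRA_Suc g)
  then show ?thesis unfolding mem_def .
qed

lemma sig_imp: "PRR n P \<Longrightarrow> sigma_rel m n Q \<Longrightarrow> sigma_rel m n (\<lambda>xs. P xs \<longrightarrow> Q xs)"
proof -
  assume "PRR n P" "sigma_rel m n Q"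
  then have "sigma_rel m n (\<lambda>xs. \<not> P xs \<or> Q xs)" by (intro sig_or[OF sig_PRR[OF PRR_not]])
  then show ?thesis by (rule sig_cong) auto
qed

lemmas PRA_I = PRA_proj PRA_hd PRA_hd2 PRA_hd3 PRA_hd4 PRA_nth1 PRA_nth2 PRA_nth3 PRA_nth4
  PRA_const PRA_Suc PRA_add PRA_pf PRA_ps PRA_pe PRA_hd_c PRA_tl_c PRA_tlk PRA_nth_c PRA_cons_c PRA_trip

lemmas PRR_I = PRR_and PRR_or PRR_iff PRR_eq PRR_neq PRR_less PRR_le PRR_imp PRR_ball PRR_bex PRR_mem

lemma Just_sig: "sigma_rel (Suc 0) (Suc (Suc (Suc (Suc 0))))
   (\<lambda>xs. JustM (\<lambda>u. mem u (xs ! 3)) (xs ! 0) (xs ! 1) (xs ! 2))"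
  unfolding JustM_def
  by (intro sig_or sig_and sig_ex sig_PRR; intro PRR_I PRA_I; simp)

lemma Just_sig_gen: "PRA n a \<Longrightarrow> PRA n b \<Longrightarrow> PRA n c \<Longrightarrow> PRA n d \<Longrightarrow>
   sigma_rel (Suc 0) n (\<lambda>xs. JustM (\<lambda>u. mem u (d xs)) (a xs) (b xs) (c xs))"
proof -
  assume a: "PRA n a" and b: "PRA n b" and c: "PRA n c" and d: "PRA n d"
  have "LPRA n (Suc (Suc (Suc (Suc 0)))) (\<lambda>xs. [a xs, b xs, c xs, d xs])"
    by (intro LPRA_cons LPRA_nil a b c d)
  from sig_subst[OF Just_sig this] show ?thesis by (rule sig_cong) simp
qed

lemma Ev_sig: "sigma_rel (Suc 0) (Suc (Suc (Suc 0))) (\<lambda>xs. Ev (xs ! 0) (xs ! 1) (xs ! 2))"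
  unfolding Ev_def
  by (intro sig_ex sig_and sig_ball sig_imp Just_sig_gen sig_PRR; intro PRR_I PRA_I; simp)


primrec holds :: "nat \<Rightarrow> nat \<Rightarrow> nat list \<Rightarrow> bool" where
  "holds 0 e xs = (\<not> Ev e (lcode xs) 0)"
| "holds (Suc m) e xs = (\<exists>y. \<not> holds m e (y # xs))"

lemma univ: "sigma_rel m k P \<Longrightarrow> \<exists>e. \<forall>xs. length xs = k \<longrightarrow> (P xs \<longleftrightarrow> holds m e xs)"
proof (induction m arbitrary: k P)
  case 0
  then obtain f where f: "PR k f" "\<forall>xs. length xs = k \<longrightarrow> (P xs \<longleftrightarrow> f xs \<noteq> 0)" by auto
  obtain c where c: "\<forall>xs. length xs = k \<longrightarrow> evp c xs = f xs" using PR_evp[OF f(1)] by blast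
  show ?case
  proof (intro exI[of _ "enc c"] allI impI)
    fix xs :: "nat list" assume "length xs = k"
    then show "P xs \<longleftrightarrow> holds 0 (enc c) xs" using f c by (auto simp: Ev_correct)
  qed
next
  case (Suc m)
  then obtain Q where Q: "sigma_rel m (Suc k) (\<lambda>ys. \<not> Q ys)" "\<forall>xs. length xs = k \<longrightarrow> (P xs \<longleftrightarrow> (\<exists>y. Q (y # xs)))"
    by auto
  obtain e where e: "\<forall>ys. length ys = Suc k \<longrightarrow> (\<not> Q ys \<longleftrightarrow> holds m e ys)" using Suc.IH[OF Q(1)] by blast
  show ?case
  proof (intro exI[of _ e] allI impI)
    fix xs :: "nat list" assume l: "length xs = k"
    have "Q (y # xs) \<longleftrightarrow> \<not> holds m e (y # xs)" for y using e[rule_format, of "y # xs"] l by auto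
    then show "P xs \<longleftrightarrow> holds (Suc m) e xs" using Q(2) l by simp
  qed
qed

lemma Ev_sig_gen: "PRA n a \<Longrightarrow> PRA n b \<Longrightarrow> PRA n c \<Longrightarrow> sigma_rel (Suc 0) n (\<lambda>xs. Ev (a xs) (b xs) (c xs))"
proof -
  assume a: "PRA n a" and b: "PRA n b" and c: "PRA n c"
  have "LPRA n (Suc (Suc (Suc 0))) (\<lambda>xs. [a xs, b xs, c xs])"
    by (intro LPRA_cons LPRA_nil a b c)
  from sig_subst[OF Ev_sig this] show ?thesis by (rule sig_cong) simp
qed

lemma holds_sig: "sigma_rel (Suc m) (Suc k) (\<lambda>ys. holds (Suc m) (hd ys) (tl ys))"
proof (induction m arbitrary: k)
  case 0
  have "sigma_rel (Suc 0) (Suc (Suc k)) (\<lambda>ws. Ev (hd (tl ws)) (cons_c (hd ws) (lcode (tl (tl ws)))) 0)"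
    by (intro Ev_sig_gen PRA_hd2 PRA_cons_c PRA_hd PRA_lcode[OF LPRA_tl2] PRA_const)
  then have "sigma_rel (Suc 0) (Suc k) (\<lambda>ys. \<exists>y. Ev (hd ys) (cons_c y (lcode (tl ys))) 0)"
    by (rule sig_ex[where P = "\<lambda>y ys. Ev (hd ys) (cons_c y (lcode (tl ys))) 0"])
  then show ?case by (rule sig_cong) simp
next
  case (Suc m)
  have G: "LPRA (Suc (Suc k)) (Suc (Suc k)) (\<lambda>ws. hd (tl ws) # hd ws # tl (tl ws))"
    by (intro LPRA_cons PRA_hd2 PRA_hd LPRA_tl2)
  from sig_subst[OF Suc.IH[of "Suc k"] G]
  have "sigma_rel (Suc m) (Suc (Suc k)) (\<lambda>ws. \<not> \<not> holds (Suc m) (hd (tl ws)) (hd ws # tl (tl ws)))"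
    by (rule sig_cong) simp
  then show ?case
    by (rule sig_SucI[where Q = "\<lambda>ws. \<not> holds (Suc m) (hd (tl ws)) (hd ws # tl (tl ws))"]) simp
qed

lemma holds_sig_gen: "PRA n a \<Longrightarrow> PRA n b \<Longrightarrow> sigma_rel (Suc m) n (\<lambda>xs. holds (Suc m) (a xs) [b xs])"
proof -
  assume a: "PRA n a" and b: "PRA n b"
  have "LPRA n (Suc (Suc 0)) (\<lambda>xs. [a xs, b xs])"
    by (intro LPRA_cons LPRA_nil a b)
  from sig_subst[OF holds_sig this] show ?thesis by (rule sig_cong) simp
qed

lemma diag_not_sig: "\<not> sigma_rel m (Suc 0) (\<lambda>xs. \<not> holds m (xs ! 0) [xs ! 0])"
proof
  assume "sigma_rel m (Suc 0) (\<lambda>xs. \<not> holds m (xs ! 0) [xs ! 0])"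
  then obtain e where "\<forall>xs. length xs = Suc 0 \<longrightarrow> (\<not> holds m (xs ! 0) [xs ! 0] \<longleftrightarrow> holds m e xs)"
    using univ by blast
  then have "\<not> holds m e [e] \<longleftrightarrow> holds m e [e]" by (auto dest: spec[of _ "[e]"])
  then show False by blast
qed

lemma PRA_div2: "PRA n f \<Longrightarrow> PRA n (\<lambda>xs. f xs div 2)"
proof -
  assume f: "PRA n f"
  have "PRA (Suc 0) (\<lambda>xs. xs ! 0 div 2)"
  proof (rule PRA_graph[where R = "\<lambda>y xs. y + y = xs ! 0 \<or> Suc (y + y) = xs ! 0" and b = "\<lambda>xs. xs ! 0"])
    show "PRR (Suc (Suc 0)) (\<lambda>ys. hd ys + hd ys = tl ys ! 0 \<or> Suc (hd ys + hd ys) = tl ys ! 0)"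
      by (intro PRR_I PRA_I) simp_all
    show "PRA (Suc 0) (\<lambda>xs. xs ! 0)" by (simp add: PRA_proj)
    fix xs :: "nat list"
    show "xs ! 0 div 2 \<le> xs ! 0 \<and> (xs ! 0 div 2 + xs ! 0 div 2 = xs ! 0 \<or> Suc (xs ! 0 div 2 + xs ! 0 div 2) = xs ! 0) \<and>
      (\<forall>y. y + y = xs ! 0 \<or> Suc (y + y) = xs ! 0 \<longrightarrow> y = xs ! 0 div 2)"
      by auto
  qed
  then show ?thesis by (rule PRA_un[OF _ f])
qed

definition Erel :: "nat \<Rightarrow> (nat \<times> nat) set" where
  "Erel m = {(x, y). x = y \<or> (x div 2 = y div 2 \<and> \<not> holds m (x div 2) [x div 2])}"

lemma Erel_equiv: "equiv UNIV (Erel m)"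
  unfolding equiv_def refl_on_def sym_def trans_def Erel_def by auto

lemma Erel_Pi: "Pi0 (Suc m) (Erel (Suc m))"
proof -
  have "sigma_rel (Suc m) (Suc (Suc 0)) (\<lambda>xs. xs ! 0 \<noteq> xs ! 1 \<and>
      (xs ! 0 div 2 \<noteq> xs ! 1 div 2 \<or> holds (Suc m) (xs ! 0 div 2) [xs ! 0 div 2]))"
    by (intro sig_and sig_or holds_sig_gen sig_PRR PRR_I PRA_I PRA_div2) simp_all
  then have "sigma_rel (Suc m) (Suc (Suc 0)) (\<lambda>xs. \<not> (xs ! 0, xs ! 1) \<in> Erel (Suc m))"
    by (rule sig_cong) (auto simp: Erel_def)
  then show ?thesis unfolding Pi0_def pi_rel_def numeral_2_eq_2 .
qed

lemma Erel_not_Sigma: "\<not> Sigma0 m (Erel m)"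
proof
  assume "Sigma0 m (Erel m)"
  then have S: "sigma_rel m (Suc (Suc 0)) (\<lambda>xs. (xs ! 0, xs ! 1) \<in> Erel m)"
    unfolding Sigma0_def numeral_2_eq_2 .
  have "LPRA (Suc 0) (Suc (Suc 0)) (\<lambda>xs. [xs ! 0 + xs ! 0, Suc (xs ! 0 + xs ! 0)])"
    by (intro LPRA_cons LPRA_nil PRA_I) simp_all
  from sig_subst[OF S this]
  have "sigma_rel m (Suc 0) (\<lambda>xs. \<not> holds m (xs ! 0) [xs ! 0])"
    by (rule sig_cong) (auto simp: Erel_def)
  then show False using diag_not_sig by blast
qed

lemma rtrancl_code: "(x, y) \<in> R\<^sup>* \<longleftrightarrow>
  (\<exists>s l. nth_c s 0 = x \<and> nth_c s l = y \<and> (\<forall>i<l. (nth_c s i, nth_c s (Suc i)) \<in> R))"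
proof
  assume "(x, y) \<in> R\<^sup>*"
  then obtain l where "(x, y) \<in> R ^^ l" by (auto simp: rtrancl_power)
  then obtain f where f: "f 0 = x" "f l = y" "\<forall>i<l. (f i, f (Suc i)) \<in> R" by (auto simp: relpow_fun_conv)
  have fs: "nth_c (lcode (map f [0..<Suc l])) i = f i" if "i \<le> l" for i
    using that by (simp add: nth_c_lcode nth_append less_Suc_eq_le)
  show "\<exists>s l. nth_c s 0 = x \<and> nth_c s l = y \<and> (\<forall>i<l. (nth_c s i, nth_c s (Suc i)) \<in> R)"
    by (intro exI[of _ "lcode (map f [0..<Suc l])"] exI[of _ l]) (use f fs in auto)
next
  assume "\<exists>s l. nth_c s 0 = x \<and> nth_c s l = y \<and> (\<forall>i<l. (nth_c s i, nth_c s (Suc i)) \<in> R)"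
  then obtain s l where "nth_c s 0 = x" "nth_c s l = y" "\<forall>i<l. (nth_c s i, nth_c s (Suc i)) \<in> R" by blast
  then have "(x, y) \<in> R ^^ l" unfolding relpow_fun_conv by blast
  then show "(x, y) \<in> R\<^sup>*" by (auto simp: rtrancl_power)
qed

lemma rtrancl_sig:
  assumes S: "sigma_rel (Suc m) (Suc (Suc 0)) (\<lambda>xs. (xs ! 0, xs ! 1) \<in> R)"
  shows "sigma_rel (Suc m) (Suc (Suc 0)) (\<lambda>xs. (xs ! 0, xs ! 1) \<in> R\<^sup>*)"
proof -
  have Rg: "sigma_rel (Suc m) n (\<lambda>xs. (a xs, b xs) \<in> R)" if a: "PRA n a" and b: "PRA n b" for n a b
  proof -
    have "LPRA n (Suc (Suc 0)) (\<lambda>xs. [a xs, b xs])" by (intro LPRA_cons LPRA_nil a b)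
    from sig_subst[OF S this] show ?thesis by (rule sig_cong) simp
  qed
  have "sigma_rel (Suc m) (Suc (Suc 0)) (\<lambda>xs. \<exists>s l. nth_c s 0 = xs ! 0 \<and> nth_c s l = xs ! 1 \<and>
      (\<forall>i<l. (nth_c s i, nth_c s (Suc i)) \<in> R))"
    by (intro sig_ex sig_and sig_ball Rg sig_PRR; intro PRR_I PRA_I; simp)
  then show ?thesis by (rule sig_cong) (simp add: rtrancl_code)
qed

theorem proposition3p1:
  fixes n :: nat
  assumes "n \<ge> 1"
  shows "(\<forall>E. equiv UNIV E \<and> \<not> Sigma0 n E \<longrightarrow> \<not> Sigma0_graphable n E)
       \<and> (\<exists>E. equiv UNIV E \<and> Pi0 n E \<and> \<not> Sigma0_graphable n E)"
proof -
  obtain m where n: "n = Suc m" using assms by (cases n) auto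
  have part1: "\<not> Sigma0_graphable n E" if "\<not> Sigma0 n E" for E
  proof
    assume "Sigma0_graphable n E"
    then obtain G where G: "Sigma0 n G" "G\<^sup>* = E" unfolding Sigma0_graphable_def by blast
    have "sigma_rel (Suc m) (Suc (Suc 0)) (\<lambda>xs. (xs ! 0, xs ! 1) \<in> G\<^sup>*)"
      using G(1) unfolding n Sigma0_def numeral_2_eq_2 by (rule rtrancl_sig)
    then have "Sigma0 n E" unfolding n Sigma0_def numeral_2_eq_2 G(2)[symmetric] .
    then show False using that by blast
  qed
  show ?thesis
  proof
    show "\<forall>E. equiv UNIV E \<and> \<not> Sigma0 n E \<longrightarrow> \<not> Sigma0_graphable n E" using part1 by blast
    show "\<exists>E. equiv UNIV E \<and> Pi0 n E \<and> \<not> Sigma0_graphable n E"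
      using Erel_equiv Erel_Pi Erel_not_Sigma part1 unfolding n by blast
  qed
qed

end
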